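(* Let $a>0$ and let $\mu_p$ be the Poisson measure on $\mathbb{R}$ with parameter $a$. Let $\lambda_n=a^nn!$ and let $\mathcal{H}_\lambda$ be the Hilbert space of entire functions $F(z)=\sum_{n\ge0}a_nz^n$ with $\sum_{n\ge0}\lambda_n|a_n|^2<\infty$, normed by $\|F\|_{\mathcal{H}_\lambda}^2=\sum_{n\ge0}\lambda_n|a_n|^2$. Then there exists a unique measure $\widetilde\mu$ on $\mathbb{C}$ such that $\mathcal{H}_\lambda=\mathcal{H}L^2(\mathbb{C},\widetilde\mu)$, i.e. an entire function $F$ belongs to $\mathcal{H}_\lambda$ if and only if $F\in L^2(\mathbb{C},\widetilde\mu)$, and in that case $\|F\|_{\mathcal{H}_\lambda}^2=\int_{\mathbb{C}}|F(z)|^2\,d\widetilde\mu(z)$.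
   Context: The Poisson measure with parameter $a$ is $\mu_p=\sum_{k\ge0}e^{-a}\frac{a^k}{k!}\delta_k$. $\mathcal{H}L^2(\mathbb{C},\widetilde\mu)$ denotes the space of entire functions on $\mathbb{C}$ that are square integrable with respect to $\widetilde\mu$, with the $L^2(\widetilde\mu)$-norm. The sequence $\lambda_n=a^nn!$ is the sequence of squared norms $\int P_n^2\,d\mu_p$ of the monic orthogonal (Charlier) polynomials $P_n$ of $\mu_p$. *)

theory Defs
  imports "HOL-Complex_Analysis.Complex_Analysis"
begin

text \<open>The weight sequence lambda_n = a^n n! (squared norms of the monic Charlier polynomials).\<close>
definition lambda_seq :: "real \<Rightarrow> nat \<Rightarrow> real" where
  "lambda_seq a n = a ^ n * fact n"

definition taylor_coeff :: "(complex \<Rightarrow> complex) \<Rightarrow> nat \<Rightarrow> complex" where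
  "taylor_coeff F n = (deriv ^^ n) F 0 / fact n"

definition in_H_lambda :: "(nat \<Rightarrow> real) \<Rightarrow> (complex \<Rightarrow> complex) \<Rightarrow> bool" where
  "in_H_lambda lam F \<longleftrightarrow> F holomorphic_on UNIV \<and>
     summable (\<lambda>n. lam n * (cmod (taylor_coeff F n))\<^sup>2)"

definition H_lambda_norm_sq :: "(nat \<Rightarrow> real) \<Rightarrow> (complex \<Rightarrow> complex) \<Rightarrow> real" where
  "H_lambda_norm_sq lam F = (\<Sum>n. lam n * (cmod (taylor_coeff F n))\<^sup>2)"

end

theory Submission
  imports Defs "HOL-Probability.Probability"
begin


lemma entire_sums:
  assumes "F holomorphic_on UNIV"
  shows "(\<lambda>n. taylor_coeff F n * z^n) sums F z"
proof -
  have "F holomorphic_on ball 0 (norm z + 1)" using assms by (rule holomorphic_on_subset) auto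
  from holomorphic_power_series[OF this, of z] show ?thesis
    by (simp add: taylor_coeff_def)
qed

lemma entire_abs_summable:
  assumes "F holomorphic_on UNIV"
  shows "summable (\<lambda>n. norm (taylor_coeff F n * z^n))"
proof -
  have "summable (\<lambda>n. taylor_coeff F n * (of_real (norm z + 1))^n)"
    using entire_sums[OF assms] by (rule sums_summable)
  then show ?thesis by (rule powser_insidea) simp
qed

lemma sq_expand:
  fixes b :: "nat \<Rightarrow> complex"
  shows "(cmod (\<Sum>n<N. b n * cis (real n * t)))^2 =
    (\<Sum>m<N. \<Sum>n<N. Re (b m * cnj (b n)) * cos (real_of_int (int m - int n) * t)
       - Im (b m * cnj (b n)) * sin (real_of_int (int m - int n) * t))"
proof -
  let ?S = "\<Sum>n<N. b n * cis (real n * t)"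
  have "(cmod ?S)^2 = Re (?S * cnj ?S)"
    by (metis Re_complex_of_real complex_norm_square)
  also have "?S * cnj ?S = (\<Sum>m<N. \<Sum>n<N. (b m * cnj (b n)) * cis (real_of_int (int m - int n) * t))"
  proof -
    have "cnj ?S = (\<Sum>n<N. cnj (b n) * cis (- (real n * t)))" by (simp add: cnj_sum cis_cnj)
    then have "?S * cnj ?S = (\<Sum>m<N. \<Sum>n<N. (b m * cis (real m * t)) * (cnj (b n) * cis (- (real n * t))))"
      by (simp add: sum_product)
    also have "\<dots> = (\<Sum>m<N. \<Sum>n<N. (b m * cnj (b n)) * cis (real_of_int (int m - int n) * t))"
      by (intro sum.cong refl) (simp add: cis_mult algebra_simps)
    finally show ?thesis .
  qed
  also have "Re \<dots> = (\<Sum>m<N. \<Sum>n<N. Re (b m * cnj (b n)) * cos (real_of_int (int m - int n) * t)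
       - Im (b m * cnj (b n)) * sin (real_of_int (int m - int n) * t))"
    by (simp add: Re_sum cis.sel)
  finally show ?thesis .
qed

lemma finite_parseval:
  fixes b :: "nat \<Rightarrow> complex"
  shows "((\<lambda>t. (cmod (\<Sum>n<N. b n * cis (real n * t)))^2) has_integral
     (2*pi * (\<Sum>n<N. (cmod (b n))^2))) {-pi..pi}"
proof -
  have "((\<lambda>t. \<Sum>m<N. \<Sum>n<N. Re (b m * cnj (b n)) * cos (real_of_int (int m - int n) * t)
       - Im (b m * cnj (b n)) * sin (real_of_int (int m - int n) * t)) has_integral
     (\<Sum>m<N. \<Sum>n<N. Re (b m * cnj (b n)) * (if int m - int n = 0 then 2*pi else 0) - Im (b m * cnj (b n)) * 0)) {-pi..pi}"
    by (intro has_integral_sum has_integral_diff has_integral_mult_right has_integral_cos_nx has_integral_sin_nx) auto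
  also have "(\<Sum>m<N. \<Sum>n<N. Re (b m * cnj (b n)) * (if int m - int n = 0 then 2*pi else 0) - Im (b m * cnj (b n)) * 0)
     = (\<Sum>m<N. Re (b m * cnj (b m)) * (2*pi))"
  proof (rule sum.cong[OF refl])
    fix m assume "m \<in> {..<N}"
    have "(\<Sum>n<N. Re (b m * cnj (b n)) * (if int m - int n = 0 then 2*pi else 0) - Im (b m * cnj (b n)) * 0)
       = (\<Sum>n<N. if m = n then Re (b m * cnj (b n)) * (2*pi) else 0)"
      by (intro sum.cong) auto
    also have "\<dots> = Re (b m * cnj (b m)) * (2*pi)" using \<open>m \<in> _\<close> by (simp add: sum.delta)
    finally show "(\<Sum>n<N. Re (b m * cnj (b n)) * (if int m - int n = 0 then 2*pi else 0) - Im (b m * cnj (b n)) * 0) = Re (b m * cnj (b m)) * (2*pi)" .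
  qed
  also have "\<dots> = 2*pi * (\<Sum>n<N. (cmod (b n))^2)"
    by (simp add: sum_distrib_left complex_mult_cnj cmod_power2 mult.commute)
  finally show ?thesis by (simp add: sq_expand)
qed


lemma circle_parseval:
  assumes F: "F holomorphic_on UNIV" and r: "r \<ge> 0"
  shows "((\<lambda>t. (cmod (F (of_real r * cis t)))^2) has_integral
           (2*pi * (\<Sum>n. (cmod (taylor_coeff F n))^2 * r^(2*n)))) {-pi..pi}"
    and "summable (\<lambda>n. (cmod (taylor_coeff F n))^2 * r^(2*n))"
proof -
  define c where "c = taylor_coeff F"
  define b where "b n = c n * of_real r ^ n" for n
  define g where "g N t = (cmod (\<Sum>n<N. b n * cis (real n * t)))^2" for N t
  define G where "G t = (cmod (F (of_real r * cis t)))^2" for t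
  define B where "B = (\<Sum>n. norm (c n * (of_real r :: complex)^n))"
  have Bsum: "summable (\<lambda>n. norm (c n * (of_real r :: complex)^n))"
    unfolding c_def by (rule entire_abs_summable[OF F])
  have Seq: "(\<Sum>n<N. b n * cis (real n * t)) = (\<Sum>n<N. c n * (of_real r * cis t)^n)" for N t
    by (simp add: b_def power_mult_distrib Complex.DeMoivre mult.assoc)
  have conv: "(\<lambda>N. g N t) \<longlonglongrightarrow> G t" for t
  proof -
    have "(\<lambda>n. c n * (of_real r * cis t)^n) sums F (of_real r * cis t)"
      unfolding c_def by (rule entire_sums[OF F])
    then have "(\<lambda>N. \<Sum>n<N. b n * cis (real n * t)) \<longlonglongrightarrow> F (of_real r * cis t)"
      by (simp add: sums_def Seq)
    then show ?thesis unfolding g_def G_def by (intro tendsto_intros)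
  qed
  have bound: "norm (g N t) \<le> B^2" for N t
  proof -
    have "cmod (\<Sum>n<N. b n * cis (real n * t)) \<le> (\<Sum>n<N. norm (b n * cis (real n * t)))"
      by (rule norm_sum)
    also have "\<dots> = (\<Sum>n<N. norm (c n * (of_real r :: complex)^n))"
      by (simp add: b_def norm_mult)
    also have "\<dots> \<le> B" unfolding B_def by (rule sum_le_suminf[OF Bsum]) auto
    finally have "cmod (\<Sum>n<N. b n * cis (real n * t)) \<le> B" .
    then show ?thesis unfolding g_def by (simp add: power_mono)
  qed
  have gint: "g N integrable_on {-pi..pi}" for N
    using finite_parseval[of b N] unfolding g_def by blast
  have hint: "(\<lambda>t. B^2) integrable_on {-pi..pi}" by (rule integrable_const_ivl)
  from dominated_convergence[OF gint hint bound conv]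
  have Gint: "G integrable_on {-pi..pi}"
    and lim: "(\<lambda>N. integral {-pi..pi} (g N)) \<longlonglongrightarrow> integral {-pi..pi} G" by auto
  have "integral {-pi..pi} (g N) = 2*pi * (\<Sum>n<N. (cmod (b n))^2)" for N
    using finite_parseval[of b N] unfolding g_def by (rule integral_unique)
  with lim have "(\<lambda>N. 2*pi * (\<Sum>n<N. (cmod (b n))^2)) \<longlonglongrightarrow> integral {-pi..pi} G" by simp
  then have "(\<lambda>N. (2*pi * (\<Sum>n<N. (cmod (b n))^2)) / (2*pi)) \<longlonglongrightarrow> integral {-pi..pi} G / (2*pi)"
    by (intro tendsto_intros) auto
  moreover have "(cmod (b n))^2 = (cmod (taylor_coeff F n))^2 * r^(2*n)" for n
    using r by (simp add: b_def c_def norm_mult norm_power power_mult_distrib power_mult[symmetric] mult.commute)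
  ultimately have sm: "(\<lambda>n. (cmod (taylor_coeff F n))^2 * r^(2*n)) sums (integral {-pi..pi} G / (2*pi))"
    by (simp add: sums_def)
  then show "summable (\<lambda>n. (cmod (taylor_coeff F n))^2 * r^(2*n))" by (rule sums_summable)
  have "integral {-pi..pi} G = 2*pi * (\<Sum>n. (cmod (taylor_coeff F n))^2 * r^(2*n))"
    using sums_unique[OF sm] by (simp add: field_simps)
  with integrable_integral[OF Gint]
  show "((\<lambda>t. (cmod (F (of_real r * cis t)))^2) has_integral
           (2*pi * (\<Sum>n. (cmod (taylor_coeff F n))^2 * r^(2*n)))) {-pi..pi}"
    unfolding G_def by simp
qed



definition wgt :: "real \<times> real \<Rightarrow> ennreal" where
  "wgt x = ennreal (exp (- fst x) / (2*pi)) * indicator ({0..} \<times> {-pi..pi}) x"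
definition Phi :: "real \<Rightarrow> real \<times> real \<Rightarrow> complex" where
  "Phi a x = complex_of_real (sqrt (a * fst x)) * cis (snd x)"
definition muG :: "real \<Rightarrow> complex measure" where
  "muG a = distr (density (lborel \<Otimes>\<^sub>M lborel) wgt) borel (Phi a)"

lemma sets_muG: "sets (muG a) = sets borel" by (simp add: muG_def)

lemma cis_meas[measurable]: "(\<lambda>t. cis t) \<in> borel_measurable borel"
  unfolding cis_conv_exp by measurable

lemma Phi_meas: "Phi a \<in> borel_measurable (lborel \<Otimes>\<^sub>M lborel)"
  unfolding Phi_def by measurable

lemma wgt_meas: "wgt \<in> borel_measurable (lborel \<Otimes>\<^sub>M lborel)"
  unfolding wgt_def by measurable

lemma entire_meas: "F holomorphic_on UNIV \<Longrightarrow> F \<in> borel_measurable borel"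
  by (intro borel_measurable_continuous_onI holomorphic_on_imp_continuous_on)


lemma inner_int:
  assumes a: "a > 0" and F: "F holomorphic_on UNIV"
  shows "(\<integral>\<^sup>+t. wgt (s,t) * ennreal ((cmod (F (Phi a (s,t))))^2) \<partial>lborel) =
     (\<Sum>n. ennreal ((cmod (taylor_coeff F n))^2 * a^n) * (ennreal (s^n * exp (-s)) * indicator {0..} s))"
proof (cases "s \<ge> 0")
  case False
  then show ?thesis by (simp add: wgt_def indicator_def)
next
  case True
  have Fm[measurable]: "F \<in> borel_measurable borel" by (rule entire_meas[OF F])
  define r where "r = sqrt (a * s)"
  have r: "r \<ge> 0" using a True by (simp add: r_def)
  have r2: "r^(2*n) = (a * s)^n" for n using a True by (simp add: r_def power_mult)
  define c where "c n = (cmod (taylor_coeff F n))^2" for n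
  note cp = circle_parseval[OF F r]
  have sm: "summable (\<lambda>n. c n * (a * s)^n)" using cp(2) by (simp add: r2 c_def)
  have "(\<integral>\<^sup>+t. wgt (s,t) * ennreal ((cmod (F (Phi a (s,t))))^2) \<partial>lborel)
      = (\<integral>\<^sup>+t. ennreal (exp (- s) / (2*pi)) * ennreal (indicator {-pi..pi} t * (cmod (F (of_real r * cis t)))^2) \<partial>lborel)"
    using True by (intro nn_integral_cong) (auto simp: wgt_def Phi_def r_def indicator_def)
  also have "\<dots> = ennreal (exp (- s) / (2*pi)) * (\<integral>\<^sup>+t. ennreal (indicator {-pi..pi} t * (cmod (F (of_real r * cis t)))^2) \<partial>lborel)"
    by (rule nn_integral_cmult) measurable
  also have "(\<integral>\<^sup>+t. ennreal (indicator {-pi..pi} t * (cmod (F (of_real r * cis t)))^2) \<partial>lborel)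
      = ennreal (2*pi * (\<Sum>n. c n * (a * s)^n))"
    using nn_integral_has_integral_lebesgue[OF _ cp(1)] by (simp add: r2 c_def)
  also have "ennreal (exp (- s) / (2*pi)) * ennreal (2*pi * (\<Sum>n. c n * (a * s)^n))
      = ennreal (\<Sum>n. c n * a^n * (s^n * exp (-s)))"
  proof -
    have "(\<Sum>n. c n * a^n * (s^n * exp (-s))) = (\<Sum>n. c n * (a * s)^n) * exp(-s)"
      by (subst suminf_mult2[OF sm]) (simp add: power_mult_distrib mult_ac)
    also have "\<dots> = exp (- s) / (2*pi) * (2*pi * (\<Sum>n. c n * (a * s)^n))" by simp
    finally show ?thesis by (simp add: ennreal_mult'[symmetric])
  qed
  also have "\<dots> = (\<Sum>n. ennreal (c n * a^n * (s^n * exp (-s))))"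
  proof (rule suminf_ennreal2[symmetric])
    show "\<And>n. 0 \<le> c n * a^n * (s^n * exp (-s))" using a True by (simp add: c_def)
    show "summable (\<lambda>n. c n * a^n * (s^n * exp (-s)))"
      using summable_mult2[OF sm, of "exp (-s)"] by (simp add: power_mult_distrib mult_ac)
  qed
  also have "\<dots> = (\<Sum>n. ennreal ((cmod (taylor_coeff F n))^2 * a^n) * (ennreal (s^n * exp (-s)) * indicator {0..} s))"
    using True a by (intro suminf_cong) (simp add: c_def ennreal_mult'' indicator_def)
  finally show ?thesis .
qed

lemma key:
  assumes a: "a > 0" and F: "F holomorphic_on UNIV"
  shows "(\<integral>\<^sup>+z. ennreal ((cmod (F z))^2) \<partial>muG a) =
     (\<Sum>n. ennreal (lambda_seq a n * (cmod (taylor_coeff F n))^2))"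
proof -
  have Fm[measurable]: "F \<in> borel_measurable borel" by (rule entire_meas[OF F])
  note [measurable] = Phi_meas wgt_meas
  have "(\<integral>\<^sup>+z. ennreal ((cmod (F z))^2) \<partial>muG a)
      = (\<integral>\<^sup>+x. ennreal ((cmod (F (Phi a x)))^2) \<partial>density (lborel \<Otimes>\<^sub>M lborel) wgt)"
    unfolding muG_def by (rule nn_integral_distr) measurable
  also have "\<dots> = (\<integral>\<^sup>+x. wgt x * ennreal ((cmod (F (Phi a x)))^2) \<partial>(lborel \<Otimes>\<^sub>M lborel))"
    by (rule nn_integral_density) measurable
  also have "\<dots> = (\<integral>\<^sup>+s. \<integral>\<^sup>+t. wgt (s,t) * ennreal ((cmod (F (Phi a (s,t))))^2) \<partial>lborel \<partial>lborel)"
    by (rule lborel.nn_integral_fst[symmetric]) measurable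
  also have "\<dots> = (\<integral>\<^sup>+s. (\<Sum>n. ennreal ((cmod (taylor_coeff F n))^2 * a^n) * (ennreal (s^n * exp (-s)) * indicator {0..} s)) \<partial>lborel)"
    by (simp add: inner_int[OF a F])
  also have "\<dots> = (\<Sum>n. \<integral>\<^sup>+s. ennreal ((cmod (taylor_coeff F n))^2 * a^n) * (ennreal (s^n * exp (-s)) * indicator {0..} s) \<partial>lborel)"
    by (rule nn_integral_suminf) measurable
  also have "\<dots> = (\<Sum>n. ennreal ((cmod (taylor_coeff F n))^2 * a^n) * ennreal (fact n))"
    by (subst nn_integral_cmult) (auto simp: nn_intergal_power_times_exp_Ici)
  also have "\<dots> = (\<Sum>n. ennreal (lambda_seq a n * (cmod (taylor_coeff F n))^2))"
    using a by (intro suminf_cong) (simp add: lambda_seq_def ennreal_mult''[symmetric] mult_ac)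
  finally show ?thesis .
qed



lemma char_zero_measure:
  fixes M :: "real measure"
  assumes "sets M = sets borel"
  shows "char M 0 = complex_of_real (measure M UNIV)"
  using sets_eq_imp_space_eq[OF assms] by (simp add: char_def scaleR_conv_of_real)

lemma char_unique_finite:
  fixes M1 M2 :: "real measure"
  assumes f1: "finite_measure M1" and f2: "finite_measure M2"
    and s1: "sets M1 = sets borel" and s2: "sets M2 = sets borel" and ch: "char M1 = char M2"
  shows "M1 = M2"
proof -
  have sp1: "space M1 = UNIV" using sets_eq_imp_space_eq[OF s1] by simp
  have sp2: "space M2 = UNIV" using sets_eq_imp_space_eq[OF s2] by simp
  define m where "m = measure M1 UNIV"
  have m2: "measure M2 UNIV = m"
    using char_zero_measure[OF s1] char_zero_measure[OF s2] ch by (simp add: m_def)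
  have e1: "emeasure M1 UNIV = ennreal m"
    using finite_measure.emeasure_eq_measure[OF f1] by (simp add: m_def)
  have e2: "emeasure M2 UNIV = ennreal m"
    using finite_measure.emeasure_eq_measure[OF f2] m2 by simp
  have m0: "m \<ge> 0" by (simp add: m_def)
  show ?thesis
  proof (cases "m = 0")
    case True
    show ?thesis
    proof (rule measure_eqI)
      show "sets M1 = sets M2" using s1 s2 by simp
      fix A assume A: "A \<in> sets M1"
      have "emeasure M1 A \<le> emeasure M1 UNIV" using sp1 by (metis emeasure_space)
      moreover have "emeasure M2 A \<le> emeasure M2 UNIV" using sp2 by (metis emeasure_space)
      ultimately show "emeasure M1 A = emeasure M2 A" using e1 e2 True by simp
    qed
  next
    case False
    with m0 have mpos: "m > 0" by simp
    define N1 where "N1 = density M1 (\<lambda>_. ennreal (1/m))"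
    define N2 where "N2 = density M2 (\<lambda>_. ennreal (1/m))"
    have eN1: "emeasure N1 A = ennreal (1/m) * emeasure M1 A" if "A \<in> sets borel" for A
      unfolding N1_def using that s1 by (simp add: emeasure_density_const)
    have eN2: "emeasure N2 A = ennreal (1/m) * emeasure M2 A" if "A \<in> sets borel" for A
      unfolding N2_def using that s2 by (simp add: emeasure_density_const)
    have one: "ennreal (1/m) * ennreal m = 1" using mpos by (simp add: ennreal_mult[symmetric])
    have rd1: "real_distribution N1"
    proof -
      have "prob_space N1"
        by (rule prob_spaceI) (simp add: N1_def sp1 emeasure_density_const s1 e1 one)
      then show ?thesis unfolding real_distribution_def real_distribution_axioms_def
        using s1 by (simp add: N1_def)
    qed
    have rd2: "real_distribution N2"
    proof -
      have "prob_space N2"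
        by (rule prob_spaceI) (simp add: N2_def sp2 emeasure_density_const s2 e2 one)
      then show ?thesis unfolding real_distribution_def real_distribution_axioms_def
        using s2 by (simp add: N2_def)
    qed
    have c1: "char N1 t = (1/m) *\<^sub>R char M1 t" for t
      unfolding N1_def char_def using mpos
      by (subst integral_density) (auto simp: s1 measurable_cong_sets[OF s1 refl])
    have c2: "char N2 t = (1/m) *\<^sub>R char M2 t" for t
      unfolding N2_def char_def using mpos
      by (subst integral_density) (auto simp: s2 measurable_cong_sets[OF s2 refl])
    have "N1 = N2" by (rule Levy_uniqueness[OF rd1 rd2]) (simp add: c1 c2 ch fun_eq_iff)
    show ?thesis
    proof (rule measure_eqI)
      show "sets M1 = sets M2" using s1 s2 by simp
      fix A assume A: "A \<in> sets M1"
      then have Ab: "A \<in> sets borel" using s1 by simp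
      have "ennreal m * emeasure N1 A = ennreal m * emeasure N2 A" using \<open>N1 = N2\<close> by simp
      then show "emeasure M1 A = emeasure M2 A"
        using one by (simp add: eN1[OF Ab] eN2[OF Ab] mult.assoc[symmetric] mult.commute[of "ennreal m"])
    qed
  qed
qed


lemma fin_density:
  assumes f: "finite_measure M" and g: "g \<in> borel_measurable M" "\<And>z. 0 \<le> g z" "\<And>z. g z \<le> K"
  shows "finite_measure (density M (\<lambda>z. ennreal (g z)))"
proof (rule finite_measureI)
  have "emeasure (density M (\<lambda>z. ennreal (g z))) (space (density M (\<lambda>z. ennreal (g z))))
      = (\<integral>\<^sup>+z. ennreal (g z) * indicator (space M) z \<partial>M)"
    using g by (simp add: emeasure_density)
  also have "\<dots> \<le> (\<integral>\<^sup>+z. ennreal K \<partial>M)"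
    using g by (intro nn_integral_mono) (auto simp: indicator_def intro!: ennreal_leI)
  also have "\<dots> = ennreal K * emeasure M (space M)" by simp
  also have "\<dots> < \<infinity>" using finite_measure.emeasure_finite[OF f]
    by (simp add: ennreal_mult_less_top less_top)
  finally show "emeasure (density M (\<lambda>z. ennreal (g z))) (space (density M (\<lambda>z. ennreal (g z)))) \<noteq> \<infinity>"
    by simp
qed

lemma bnd_cos: "0 \<le> (g::real) \<Longrightarrow> g \<le> K \<Longrightarrow> norm (g * cos x) \<le> K"
proof -
  assume g: "0 \<le> g" "g \<le> K"
  have "norm (g * cos x) = g * \<bar>cos x\<bar>" using g by (simp add: abs_mult)
  also have "\<dots> \<le> g * 1" using g by (intro mult_left_mono) auto
  finally show ?thesis using g by simp
qed

lemma bnd_sin: "0 \<le> (g::real) \<Longrightarrow> g \<le> K \<Longrightarrow> norm (g * sin x) \<le> K"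
proof -
  assume g: "0 \<le> g" "g \<le> K"
  have "norm (g * sin x) = g * \<bar>sin x\<bar>" using g by (simp add: abs_mult)
  also have "\<dots> \<le> g * 1" using g by (intro mult_left_mono) auto
  finally show ?thesis using g by simp
qed

lemma char_proj:
  fixes \<nu> :: "complex measure" and g h :: "complex \<Rightarrow> real"
  assumes f: "finite_measure \<nu>" and s: "sets \<nu> = sets borel"
   and g: "g \<in> borel_measurable borel" "\<And>z. 0 \<le> g z" "\<And>z. g z \<le> K"
   and h: "h \<in> borel_measurable borel"
  shows "char (distr (density \<nu> (\<lambda>z. ennreal (g z))) borel h) t =
     complex_of_real (\<integral>z. g z * cos (t * h z) \<partial>\<nu>) + \<i> * complex_of_real (\<integral>z. g z * sin (t * h z) \<partial>\<nu>)"
proof -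
  note [measurable] = g(1) h
  note [measurable_cong] = s
  have ic: "integrable \<nu> (\<lambda>z. g z * cos (t * h z))"
    by (rule finite_measure.integrable_const_bound[OF f, where B=K])
       (auto intro!: bnd_cos g simp del: real_norm_def)
  have is': "integrable \<nu> (\<lambda>z. g z * sin (t * h z))"
    by (rule finite_measure.integrable_const_bound[OF f, where B=K])
       (auto intro!: bnd_sin g simp del: real_norm_def)
  have "char (distr (density \<nu> (\<lambda>z. ennreal (g z))) borel h) t
      = (\<integral>z. iexp (t * h z) \<partial>density \<nu> (\<lambda>z. ennreal (g z)))"
    unfolding char_def by (subst integral_distr) auto
  also have "\<dots> = (\<integral>z. g z *\<^sub>R iexp (t * h z) \<partial>\<nu>)"
    by (subst integral_density) (auto simp: g)
  also have "\<dots> = (\<integral>z. complex_of_real (g z * cos (t * h z)) + \<i> * complex_of_real (g z * sin (t * h z)) \<partial>\<nu>)"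
    by (intro Bochner_Integration.integral_cong refl) (simp add: complex_eq_iff Re_exp Im_exp flip: of_real_mult)
  also have "\<dots> = complex_of_real (\<integral>z. g z * cos (t * h z) \<partial>\<nu>) + \<i> * complex_of_real (\<integral>z. g z * sin (t * h z) \<partial>\<nu>)"
  proof -
    have ic': "integrable \<nu> (\<lambda>z. complex_of_real (g z * cos (t * h z)))"
      using ic by (simp only: complex_of_real_integrable_eq)
    have is'': "integrable \<nu> (\<lambda>z. \<i> * complex_of_real (g z * sin (t * h z)))"
      using is' by (intro integrable_mult_right) (simp only: complex_of_real_integrable_eq)
    show ?thesis
      by (subst Bochner_Integration.integral_add[OF ic' is'']) (simp only: integral_mult_right_zero integral_complex_of_real)
  qed
  finally show ?thesis .
qed

lemma proj_unique:
  fixes \<nu>1 \<nu>2 :: "complex measure" and g h :: "complex \<Rightarrow> real"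
  assumes f1: "finite_measure \<nu>1" and f2: "finite_measure \<nu>2"
   and s1: "sets \<nu>1 = sets borel" and s2: "sets \<nu>2 = sets borel"
   and g: "g \<in> borel_measurable borel" "\<And>z. 0 \<le> g z" "\<And>z. g z \<le> K"
   and h: "h \<in> borel_measurable borel"
   and cs: "\<And>t. (\<integral>z. g z * cos (t * h z) \<partial>\<nu>1) = (\<integral>z. g z * cos (t * h z) \<partial>\<nu>2)"
   and sn: "\<And>t. (\<integral>z. g z * sin (t * h z) \<partial>\<nu>1) = (\<integral>z. g z * sin (t * h z) \<partial>\<nu>2)"
   and B: "B \<in> sets borel"
  shows "(\<integral>z. g z * indicator B (h z) \<partial>\<nu>1) = (\<integral>z. g z * indicator B (h z) \<partial>\<nu>2)"
proof -
  note [measurable] = g(1) h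
  define M1 where "M1 = distr (density \<nu>1 (\<lambda>z. ennreal (g z))) borel h"
  define M2 where "M2 = distr (density \<nu>2 (\<lambda>z. ennreal (g z))) borel h"
  have fm1: "finite_measure M1" unfolding M1_def
    by (rule finite_measure.finite_measure_distr[OF fin_density[OF f1 _ g(2,3)]])
       (auto simp: measurable_cong_sets[OF s1 refl])
  have fm2: "finite_measure M2" unfolding M2_def
    by (rule finite_measure.finite_measure_distr[OF fin_density[OF f2 _ g(2,3)]])
       (auto simp: measurable_cong_sets[OF s2 refl])
  have "char M1 = char M2"
    unfolding M1_def M2_def
    by (rule ext) (simp add: char_proj[OF f1 s1 g h] char_proj[OF f2 s2 g h] cs sn)
  then have "M1 = M2" by (intro char_unique_finite fm1 fm2) (auto simp: M1_def M2_def)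
  have eq: "(\<integral>z. g z * indicator B (h z) \<partial>\<nu>) = measure (distr (density \<nu> (\<lambda>z. ennreal (g z))) borel h) B"
    if s: "sets \<nu> = sets borel" for \<nu> :: "complex measure"
  proof -
    note [measurable_cong] = s
    have "measure (distr (density \<nu> (\<lambda>z. ennreal (g z))) borel h) B
       = (\<integral>x. indicator B x \<partial>distr (density \<nu> (\<lambda>z. ennreal (g z))) borel h)" by simp
    also have "\<dots> = (\<integral>z. indicator B (h z) \<partial>density \<nu> (\<lambda>z. ennreal (g z)))"
      using B by (subst integral_distr) auto
    also have "\<dots> = (\<integral>z. g z * indicator B (h z) \<partial>\<nu>)"
      using B by (subst integral_density) (auto simp: g)
    finally show ?thesis by simp
  qed
  show ?thesis using eq[OF s1] eq[OF s2] \<open>M1 = M2\<close> by (simp add: M1_def M2_def)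
qed



lemma intg:
  fixes f :: "complex \<Rightarrow> real"
  assumes "finite_measure \<nu>" "sets \<nu> = sets borel" "f \<in> borel_measurable borel" "\<And>z. \<bar>f z\<bar> \<le> K"
  shows "integrable \<nu> f"
  by (rule finite_measure.integrable_const_bound[OF assms(1), where B=K])
     (auto simp: assms(4) measurable_cong_sets[OF assms(2) refl] assms(3))

lemma int_comb:
  fixes u1 u2 u3 F :: "complex \<Rightarrow> real"
  assumes "integrable \<nu> u1" "integrable \<nu> u2" "integrable \<nu> u3" "\<And>z. F z = u1 z + (u2 z + c * u3 z) / 2"
  shows "(\<integral>z. F z \<partial>\<nu>) = (\<integral>z. u1 z \<partial>\<nu>) + ((\<integral>z. u2 z \<partial>\<nu>) + c * (\<integral>z. u3 z \<partial>\<nu>)) / 2"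
proof -
  have "(\<integral>z. F z \<partial>\<nu>) = (\<integral>z. u1 z + (u2 z + c * u3 z) / 2 \<partial>\<nu>)" by (simp add: assms(4))
  also have "\<dots> = (\<integral>z. u1 z \<partial>\<nu>) + (\<integral>z. (u2 z + c * u3 z) / 2 \<partial>\<nu>)"
    using assms(1-3) by (intro Bochner_Integration.integral_add) auto
  also have "(\<integral>z. (u2 z + c * u3 z) / 2 \<partial>\<nu>) = (\<integral>z. (u2 z + c * u3 z) \<partial>\<nu>) / 2" by simp
  also have "(\<integral>z. (u2 z + c * u3 z) \<partial>\<nu>) = (\<integral>z. u2 z \<partial>\<nu>) + (\<integral>z. c * u3 z \<partial>\<nu>)"
    using assms(1-3) by (intro Bochner_Integration.integral_add) auto
  finally show ?thesis by simp
qed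

lemma cos_swap: "cos ((a::real) - b) = cos (b - a)"
  by (metis cos_minus minus_diff_eq)

lemma abs_cos_le: "\<bar>cos (x::real)\<bar> \<le> 1" by simp
lemma abs_sin_le: "\<bar>sin (x::real)\<bar> \<le> 1" by simp

lemma rect_unique:
  fixes \<nu>1 \<nu>2 :: "complex measure"
  assumes f1: "finite_measure \<nu>1" and f2: "finite_measure \<nu>2"
   and s1: "sets \<nu>1 = sets borel" and s2: "sets \<nu>2 = sets borel"
   and rect: "\<And>A B. A \<in> sets borel \<Longrightarrow> B \<in> sets borel \<Longrightarrow>
      emeasure \<nu>1 {z. Re z \<in> A \<and> Im z \<in> B} = emeasure \<nu>2 {z. Re z \<in> A \<and> Im z \<in> B}"
  shows "\<nu>1 = \<nu>2"
proof -
  define E where "E = {{z. Re z \<in> A \<and> Im z \<in> B} | A B. A \<in> sets borel \<and> B \<in> sets borel}"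
  have ReM: "(\<lambda>z::complex. Re z) \<in> borel_measurable borel" by measurable
  have ImM: "(\<lambda>z::complex. Im z) \<in> borel_measurable borel" by measurable
  have Esub: "E \<subseteq> sets borel"
  proof
    fix X assume "X \<in> E"
    then obtain A B where AB: "A \<in> sets borel" "B \<in> sets borel" and Xeq: "X = {z. Re z \<in> A \<and> Im z \<in> B}"
      unfolding E_def by blast
    have "(\<lambda>z. Re z) -` A \<inter> space borel \<in> sets borel" by (rule measurable_sets[OF ReM AB(1)])
    moreover have "(\<lambda>z. Im z) -` B \<inter> space borel \<in> sets borel" by (rule measurable_sets[OF ImM AB(2)])
    ultimately have "((\<lambda>z. Re z) -` A \<inter> space borel) \<inter> ((\<lambda>z. Im z) -` B \<inter> space borel) \<in> sets borel" by blast
    moreover have "((\<lambda>z. Re z) -` A \<inter> space borel) \<inter> ((\<lambda>z. Im z) -` B \<inter> space borel) = X"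
      using Xeq by auto
    ultimately show "X \<in> sets borel" by simp
  qed
  have boxE: "box a b \<in> E" for a b :: complex
    unfolding E_def
    by (intro CollectI exI[of _ "{Re a<..<Re b}"] exI[of _ "{Im a<..<Im b}"]) (simp add: box_complex_eq)
  have sE: "sets borel = sigma_sets UNIV E"
  proof
    have "sets (borel :: complex measure) = sigma_sets UNIV (range (\<lambda>(a, b). box a b :: complex set))"
      by (subst borel_eq_box) (simp add: sets_measure_of)
    also have "\<dots> \<subseteq> sigma_sets UNIV E"
    proof (rule sigma_sets_mono', rule subsetI)
      fix X assume "X \<in> range (\<lambda>(a, b). box a b :: complex set)"
      then obtain p where "X = (\<lambda>(a, b). box a b) p" by blast
      then show "X \<in> E" by (cases p) (simp add: boxE)
    qed
    finally show "sets (borel :: complex measure) \<subseteq> sigma_sets UNIV E" .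
    have "sigma_sets (space borel) E \<subseteq> sets (borel :: complex measure)"
      by (rule sets.sigma_sets_subset[OF Esub])
    then show "sigma_sets UNIV E \<subseteq> sets (borel :: complex measure)" by simp
  qed
  have UE: "UNIV \<in> E" unfolding E_def
    by (rule CollectI, rule exI[of _ UNIV], rule exI[of _ UNIV]) simp
  show ?thesis
  proof (rule measure_eqI_generator_eq[where E=E and \<Omega>=UNIV and A="\<lambda>_. UNIV"])
    show "Int_stable E" unfolding Int_stable_def
    proof (intro ballI)
      fix a b assume aE: "a \<in> E" and bE: "b \<in> E"
      from aE obtain A B where AB: "A \<in> sets borel" "B \<in> sets borel"
        and a: "a = {z. Re z \<in> A \<and> Im z \<in> B}" unfolding E_def by blast
      from bE obtain A' B' where AB': "A' \<in> sets borel" "B' \<in> sets borel"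
        and b: "b = {z. Re z \<in> A' \<and> Im z \<in> B'}" unfolding E_def by blast
      have eq: "a \<inter> b = {z. Re z \<in> A \<inter> A' \<and> Im z \<in> B \<inter> B'}" using a b by auto
      have m: "A \<inter> A' \<in> sets borel" "B \<inter> B' \<in> sets borel" using AB AB' by auto
      show "a \<inter> b \<in> E" unfolding E_def
        by (rule CollectI, rule exI[of _ "A \<inter> A'"], rule exI[of _ "B \<inter> B'"]) (simp only: eq m simp_thms)
    qed
    show "E \<subseteq> Pow UNIV" by simp
    fix X assume "X \<in> E"
    then obtain A B where AB: "A \<in> sets borel" "B \<in> sets borel" and Xeq: "X = {z. Re z \<in> A \<and> Im z \<in> B}"
      unfolding E_def by blast
    show "emeasure \<nu>1 X = emeasure \<nu>2 X" using rect[OF AB] Xeq by simp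
  next
    show "sets \<nu>1 = sigma_sets UNIV E" using s1 sE by simp
    show "sets \<nu>2 = sigma_sets UNIV E" using s2 sE by simp
    show "range (\<lambda>_. UNIV) \<subseteq> E" using UE by auto
    show "(\<Union>i::nat. UNIV) = (UNIV :: complex set)" by simp
    show "emeasure \<nu>1 UNIV \<noteq> \<infinity>" for i :: nat
      using finite_measure.emeasure_finite[OF f1] by simp
  qed
qed

lemma fourier_unique:
  fixes \<nu>1 \<nu>2 :: "complex measure"
  assumes f1: "finite_measure \<nu>1" and f2: "finite_measure \<nu>2"
   and s1: "sets \<nu>1 = sets borel" and s2: "sets \<nu>2 = sets borel"
   and C: "\<And>s t. (\<integral>z. cos (s * Re z + t * Im z) \<partial>\<nu>1) = (\<integral>z. cos (s * Re z + t * Im z) \<partial>\<nu>2)"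
   and S: "\<And>s t. (\<integral>z. sin (s * Re z + t * Im z) \<partial>\<nu>1) = (\<integral>z. sin (s * Re z + t * Im z) \<partial>\<nu>2)"
  shows "\<nu>1 = \<nu>2"
proof -
  have ic: "integrable \<nu> (\<lambda>z. cos (s * Re z + t * Im z))" "integrable \<nu> (\<lambda>z. sin (s * Re z + t * Im z))"
    if "finite_measure \<nu>" "sets \<nu> = sets borel" for \<nu> :: "complex measure" and s t
    using that by (auto intro!: intg[where K=1])
  have ic1: "integrable \<nu>1 (\<lambda>z. cos (s * Re z + t * Im z))" "integrable \<nu>1 (\<lambda>z. sin (s * Re z + t * Im z))"
    "integrable \<nu>2 (\<lambda>z. cos (s * Re z + t * Im z))" "integrable \<nu>2 (\<lambda>z. sin (s * Re z + t * Im z))" for s t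
    using ic f1 f2 s1 s2 by auto
  have B1c: "(\<integral>z. (1 + cos (s * Re z)) * indicator B (Im z) \<partial>\<nu>1) = (\<integral>z. (1 + cos (s * Re z)) * indicator B (Im z) \<partial>\<nu>2)"
    if B: "B \<in> sets borel" for s B
  proof (rule proj_unique[OF f1 f2 s1 s2, where K=2, OF _ _ _ _ _ _ B])
    show "(\<lambda>z. 1 + cos (s * Re z)) \<in> borel_measurable borel" "(\<lambda>z. Im z) \<in> borel_measurable borel" by measurable
    show "0 \<le> 1 + cos (s * Re z)" "1 + cos (s * Re z) \<le> 2" for z
      using cos_ge_minus_one[of "s * Re z"] cos_le_one[of "s * Re z"] by linarith+
    fix t
    have e: "(1 + cos (s * Re z)) * cos (t * Im z) = cos (0 * Re z + t * Im z) + (cos (s * Re z + t * Im z) + 1 * cos ((-s) * Re z + t * Im z)) / 2" for z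
      by (simp add: algebra_simps cos_times_cos cos_swap)
    show "(\<integral>z. (1 + cos (s * Re z)) * cos (t * Im z) \<partial>\<nu>1) = (\<integral>z. (1 + cos (s * Re z)) * cos (t * Im z) \<partial>\<nu>2)"
      by (simp only: int_comb[OF ic1(1) ic1(1) ic1(1) e] int_comb[OF ic1(3) ic1(3) ic1(3) e] C)
    have e: "(1 + cos (s * Re z)) * sin (t * Im z) = sin (0 * Re z + t * Im z) + (sin (s * Re z + t * Im z) + 1 * sin ((-s) * Re z + t * Im z)) / 2" for z
      using sin_minus[of "s * Re z - t * Im z"] by (simp add: algebra_simps sin_times_cos cos_times_sin)
    show "(\<integral>z. (1 + cos (s * Re z)) * sin (t * Im z) \<partial>\<nu>1) = (\<integral>z. (1 + cos (s * Re z)) * sin (t * Im z) \<partial>\<nu>2)"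
      by (simp only: int_comb[OF ic1(2) ic1(2) ic1(2) e] int_comb[OF ic1(4) ic1(4) ic1(4) e] S)
  qed
  have B1s: "(\<integral>z. (1 + sin (s * Re z)) * indicator B (Im z) \<partial>\<nu>1) = (\<integral>z. (1 + sin (s * Re z)) * indicator B (Im z) \<partial>\<nu>2)"
    if B: "B \<in> sets borel" for s B
  proof (rule proj_unique[OF f1 f2 s1 s2, where K=2, OF _ _ _ _ _ _ B])
    show "(\<lambda>z. 1 + sin (s * Re z)) \<in> borel_measurable borel" "(\<lambda>z. Im z) \<in> borel_measurable borel" by measurable
    show "0 \<le> 1 + sin (s * Re z)" "1 + sin (s * Re z) \<le> 2" for z
      using sin_ge_minus_one[of "s * Re z"] sin_le_one[of "s * Re z"] by linarith+
    fix t
    have e: "(1 + sin (s * Re z)) * cos (t * Im z) = cos (0 * Re z + t * Im z) + (sin (s * Re z + t * Im z) + 1 * sin (s * Re z + (-t) * Im z)) / 2" for z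
      using sin_minus[of "s * Re z - t * Im z"] by (simp add: algebra_simps sin_times_cos cos_times_sin)
    show "(\<integral>z. (1 + sin (s * Re z)) * cos (t * Im z) \<partial>\<nu>1) = (\<integral>z. (1 + sin (s * Re z)) * cos (t * Im z) \<partial>\<nu>2)"
      by (simp only: int_comb[OF ic1(1) ic1(2) ic1(2) e] int_comb[OF ic1(3) ic1(4) ic1(4) e] C S)
    have e: "(1 + sin (s * Re z)) * sin (t * Im z) = sin (0 * Re z + t * Im z) + (cos (s * Re z + (-t) * Im z) + (-1) * cos (s * Re z + t * Im z)) / 2" for z
      by (simp add: algebra_simps sin_times_sin)
    show "(\<integral>z. (1 + sin (s * Re z)) * sin (t * Im z) \<partial>\<nu>1) = (\<integral>z. (1 + sin (s * Re z)) * sin (t * Im z) \<partial>\<nu>2)"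
      by (simp only: int_comb[OF ic1(2) ic1(1) ic1(1) e] int_comb[OF ic1(4) ic1(3) ic1(3) e] C S)
  qed
  have iB: "integrable \<nu> (\<lambda>z. f z * indicator B (Im z))"
    if "finite_measure \<nu>" "sets \<nu> = sets borel" "B \<in> sets borel" "f \<in> borel_measurable borel" "\<And>z. \<bar>f z\<bar> \<le> K"
    for \<nu> :: "complex measure" and f :: "complex \<Rightarrow> real" and B K
  proof (rule intg[OF that(1,2), where K="\<bar>K\<bar>"])
    show "(\<lambda>z. f z * indicator B (Im z)) \<in> borel_measurable borel" using that(3,4) by measurable
    show "\<bar>f z * indicator B (Im z)\<bar> \<le> \<bar>K\<bar>" for z using that(5)[of z] by (auto simp: indicator_def)
  qed
  have split: "(\<integral>z. (1 + f z) * indicator B (Im z) \<partial>\<nu>) = (\<integral>z. (indicator B (Im z) :: real) \<partial>\<nu>) + (\<integral>z. f z * indicator B (Im z) \<partial>\<nu>)"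
    if "finite_measure \<nu>" "sets \<nu> = sets borel" "B \<in> sets borel" "f \<in> borel_measurable borel" "\<And>z. \<bar>f z\<bar> \<le> 1"
    for \<nu> :: "complex measure" and f :: "complex \<Rightarrow> real" and B
  proof -
    have i1: "integrable \<nu> (\<lambda>z. 1 * indicator B (Im z) :: real)" 
    proof (rule intg[OF that(1,2), where K=1])
      show "(\<lambda>z. 1 * indicator B (Im z) :: real) \<in> borel_measurable borel" using that(3) by measurable
      show "\<bar>1 * indicator B (Im z)\<bar> \<le> (1::real)" for z by (auto simp: indicator_def)
    qed
    have i2: "integrable \<nu> (\<lambda>z. f z * indicator B (Im z))" by (rule iB[OF that]) 
    have "(\<integral>z. (1 + f z) * indicator B (Im z) \<partial>\<nu>) = (\<integral>z. 1 * indicator B (Im z) + f z * indicator B (Im z) \<partial>\<nu>)"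
      by (simp add: algebra_simps)
    also have "\<dots> = (\<integral>z. 1 * indicator B (Im z) \<partial>\<nu>) + (\<integral>z. f z * indicator B (Im z) \<partial>\<nu>)"
      by (rule Bochner_Integration.integral_add[OF i1 i2])
    finally show ?thesis by simp
  qed
  have ind_eq: "(\<integral>z. (indicator B (Im z) :: real) \<partial>\<nu>1) = (\<integral>z. (indicator B (Im z) :: real) \<partial>\<nu>2)"
    if B: "B \<in> sets borel" for B :: "real set"
  proof -
    have m: "(\<lambda>z. cos (0 * Re z)) \<in> borel_measurable borel" by measurable
    have "2 * (\<integral>z. (indicator B (Im z) :: real) \<partial>\<nu>1) = 2 * (\<integral>z. (indicator B (Im z) :: real) \<partial>\<nu>2)"
      using B1c[OF B, of 0] split[OF f1 s1 B m] split[OF f2 s2 B m] by simp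
    then show ?thesis by simp
  qed
  have B1': "(\<integral>z. indicator B (Im z) * cos (t * Re z) \<partial>\<nu>1) = (\<integral>z. indicator B (Im z) * cos (t * Re z) \<partial>\<nu>2)"
         "(\<integral>z. indicator B (Im z) * sin (t * Re z) \<partial>\<nu>1) = (\<integral>z. indicator B (Im z) * sin (t * Re z) \<partial>\<nu>2)"
    if B: "B \<in> sets borel" for B t
  proof -
    have m: "(\<lambda>z. cos (t * Re z)) \<in> borel_measurable borel" "(\<lambda>z. sin (t * Re z)) \<in> borel_measurable borel" by measurable
    show "(\<integral>z. indicator B (Im z) * cos (t * Re z) \<partial>\<nu>1) = (\<integral>z. indicator B (Im z) * cos (t * Re z) \<partial>\<nu>2)"
      using B1c[OF B, of t] split[OF f1 s1 B m(1)] split[OF f2 s2 B m(1)] ind_eq[OF B] by (simp add: mult.commute)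
    show "(\<integral>z. indicator B (Im z) * sin (t * Re z) \<partial>\<nu>1) = (\<integral>z. indicator B (Im z) * sin (t * Re z) \<partial>\<nu>2)"
      using B1s[OF B, of t] split[OF f1 s1 B m(2)] split[OF f2 s2 B m(2)] ind_eq[OF B] by (simp add: mult.commute)
  qed
  have rect: "(\<integral>z. (indicator B (Im z) * indicator A (Re z) :: real) \<partial>\<nu>1) = (\<integral>z. (indicator B (Im z) * indicator A (Re z) :: real) \<partial>\<nu>2)"
    if A: "A \<in> sets borel" and B: "B \<in> sets borel" for A B :: "real set"
  proof (rule proj_unique[OF f1 f2 s1 s2, where K=1, OF _ _ _ _ _ _ A])
    show "(\<lambda>z. indicator B (Im z)) \<in> borel_measurable borel" "(\<lambda>z. Re z) \<in> borel_measurable borel" using B by measurable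
    show "0 \<le> (indicator B (Im z) :: real)" "(indicator B (Im z) :: real) \<le> 1" for z by (auto simp: indicator_def)
    show "(\<integral>z. indicator B (Im z) * cos (t * Re z) \<partial>\<nu>1) = (\<integral>z. indicator B (Im z) * cos (t * Re z) \<partial>\<nu>2)" for t
      using B1'(1)[OF B] .
    show "(\<integral>z. indicator B (Im z) * sin (t * Re z) \<partial>\<nu>1) = (\<integral>z. indicator B (Im z) * sin (t * Re z) \<partial>\<nu>2)" for t
      using B1'(2)[OF B] .
  qed
  show ?thesis
  proof (rule rect_unique[OF f1 f2 s1 s2])
    fix A B :: "real set" assume AB: "A \<in> sets borel" "B \<in> sets borel"
    define X where "X = {z. Re z \<in> A \<and> Im z \<in> B}"
    have ind: "indicator B (Im z) * indicator A (Re z) = (indicator X z :: real)" for z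
      by (auto simp: X_def indicator_def)
    have meq: "measure \<nu> X = (\<integral>z. (indicator B (Im z) * indicator A (Re z) :: real) \<partial>\<nu>)"
      if "sets \<nu> = sets borel" for \<nu> :: "complex measure"
      using sets_eq_imp_space_eq[OF that] by (simp add: ind)
    have "measure \<nu>1 X = measure \<nu>2 X" using meq[OF s1] meq[OF s2] rect[OF AB] by simp
    then show "emeasure \<nu>1 {z. Re z \<in> A \<and> Im z \<in> B} = emeasure \<nu>2 {z. Re z \<in> A \<and> Im z \<in> B}"
      using finite_measure.emeasure_eq_measure[OF f1] finite_measure.emeasure_eq_measure[OF f2]
      by (simp add: X_def)
  qed
qed



definition Pprop :: "real \<Rightarrow> complex measure \<Rightarrow> bool" where
  "Pprop a \<mu> \<longleftrightarrow> sets \<mu> = sets borel \<and>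
    (\<forall>F. F holomorphic_on UNIV \<longrightarrow>
       ((in_H_lambda (lambda_seq a) F \<longleftrightarrow> integrable \<mu> (\<lambda>z. (cmod (F z))\<^sup>2)) \<and>
        (in_H_lambda (lambda_seq a) F \<longrightarrow>
           H_lambda_norm_sq (lambda_seq a) F = (\<integral>z. (cmod (F z))\<^sup>2 \<partial>\<mu>))))"

lemma Pprop_muG:
  assumes a: "a > 0"
  shows "Pprop a (muG a)"
  unfolding Pprop_def
proof (intro conjI allI impI)
  show "sets (muG a) = sets borel" by (rule sets_muG)
  fix F :: "complex \<Rightarrow> complex" assume F: "F holomorphic_on UNIV"
  define x where "x = (\<lambda>n. lambda_seq a n * (cmod (taylor_coeff F n))^2)"
  have x0: "0 \<le> x n" for n using a by (simp add: x_def lambda_seq_def)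
  have K: "(\<integral>\<^sup>+z. ennreal ((cmod (F z))^2) \<partial>muG a) = (\<Sum>n. ennreal (x n))"
    using key[OF a F] by (simp add: x_def)
  have Fm[measurable]: "F \<in> borel_measurable borel" by (rule entire_meas[OF F])
  have meas: "(\<lambda>z. (cmod (F z))^2) \<in> borel_measurable (muG a)"
    by (simp add: measurable_cong_sets[OF sets_muG refl])
  have "integrable (muG a) (\<lambda>z. (cmod (F z))\<^sup>2) \<longleftrightarrow> (\<Sum>n. ennreal (x n)) < \<infinity>"
    using meas by (simp add: integrable_iff_bounded K)
  also have "\<dots> \<longleftrightarrow> summable x"
  proof
    assume "(\<Sum>n. ennreal (x n)) < \<infinity>"
    then show "summable x" using summable_suminf_not_top[OF x0] by simp
  next
    assume "summable x"
    then show "(\<Sum>n. ennreal (x n)) < \<infinity>" using suminf_ennreal2[OF x0] by simp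
  qed
  finally show "in_H_lambda (lambda_seq a) F \<longleftrightarrow> integrable (muG a) (\<lambda>z. (cmod (F z))\<^sup>2)"
    using F by (simp add: in_H_lambda_def x_def)
  assume H: "in_H_lambda (lambda_seq a) F"
  then have sx: "summable x" by (simp add: in_H_lambda_def x_def)
  have "(\<integral>z. (cmod (F z))\<^sup>2 \<partial>muG a) = enn2real (\<integral>\<^sup>+z. ennreal ((cmod (F z))^2) \<partial>muG a)"
    using meas by (intro integral_eq_nn_integral) auto
  also have "\<dots> = (\<Sum>n. x n)" using K suminf_ennreal2[OF x0 sx] by (simp add: suminf_nonneg[OF sx x0])
  finally show "H_lambda_norm_sq (lambda_seq a) F = (\<integral>z. (cmod (F z))\<^sup>2 \<partial>muG a)"
    by (simp add: H_lambda_norm_sq_def x_def)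
qed



lemma hderiv_exp: "(deriv ^^ n) (\<lambda>z. exp (w * z)) = (\<lambda>z. w^n * exp (w * z))"
proof (induction n)
  case 0 then show ?case by simp
next
  case (Suc n)
  have "deriv (\<lambda>z. w^n * exp (w * z)) = (\<lambda>z. w^Suc n * exp (w * z))"
  proof
    fix z
    have "((\<lambda>z. w^n * exp (w * z)) has_field_derivative w^n * (exp (w * z) * w)) (at z)"
      by (auto intro!: derivative_eq_intros)
    then show "deriv (\<lambda>z. w^n * exp (w * z)) z = w^Suc n * exp (w * z)"
      by (simp add: DERIV_imp_deriv mult_ac)
  qed
  then show ?case using Suc by simp
qed

definition ExpC :: "complex \<Rightarrow> complex \<Rightarrow> complex \<Rightarrow> complex \<Rightarrow> complex" where
  "ExpC w v c = (\<lambda>z. exp (w * z) + c * exp (v * z))"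

lemma Ex_holo: "ExpC w v c holomorphic_on UNIV"
  unfolding ExpC_def by (intro holomorphic_intros)

lemma taylor_Ex: "taylor_coeff (ExpC w v c) n = (w^n + c * v^n) / fact n"
proof -
  have h1: "(\<lambda>z. exp (w * z)) holomorphic_on UNIV" by (intro holomorphic_intros)
  have h2: "(\<lambda>z. c * exp (v * z)) holomorphic_on UNIV" by (intro holomorphic_intros)
  have h3: "(\<lambda>z. exp (v * z)) holomorphic_on UNIV" by (intro holomorphic_intros)
  have "(deriv ^^ n) (ExpC w v c) 0 = (deriv ^^ n) (\<lambda>z. exp (w * z)) 0 + (deriv ^^ n) (\<lambda>z. c * exp (v * z)) 0"
    unfolding ExpC_def by (rule higher_deriv_add[OF h1 h2]) auto
  also have "(deriv ^^ n) (\<lambda>z. c * exp (v * z)) 0 = c * (deriv ^^ n) (\<lambda>z. exp (v * z)) 0"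
    by (rule higher_deriv_cmult[OF h3]) auto
  finally show ?thesis by (simp add: taylor_coeff_def hderiv_exp)
qed

lemma norm_sq_add_le: "(cmod (x + y))^2 \<le> 2 * (cmod x)^2 + 2 * (cmod y)^2"
proof -
  have "cmod (x + y) \<le> cmod x + cmod y" by (rule norm_triangle_ineq)
  then have "(cmod (x + y))^2 \<le> (cmod x + cmod y)^2" by (intro power_mono) auto
  also have "\<dots> \<le> 2 * (cmod x)^2 + 2 * (cmod y)^2"
    using zero_le_power2[of "cmod x - cmod y"] unfolding power2_eq_square by (simp add: algebra_simps)
  finally show ?thesis .
qed


lemma sqpow: "((x::real)^n)^2 = (x^2)^n" by (simp add: power_mult[symmetric] mult.commute)

lemma inH_Ex:
  assumes a: "a > 0"
  shows "in_H_lambda (lambda_seq a) (ExpC w v c)"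
  unfolding in_H_lambda_def
proof (intro conjI Ex_holo)
  define g where "g n = 2 * (inverse (fact n) * (a * (cmod w)^2)^n) + 2 * (cmod c)^2 * (inverse (fact n) * (a * (cmod v)^2)^n)" for n
  have gs: "summable g" unfolding g_def
    by (intro summable_add summable_mult summable_exp)
  show "summable (\<lambda>n. lambda_seq a n * (cmod (taylor_coeff (ExpC w v c) n))^2)"
  proof (rule summable_comparison_test'[OF gs])
    fix n :: nat
    have fpos: "(0::real) < fact n" by simp
    have eq: "lambda_seq a n * (cmod (taylor_coeff (ExpC w v c) n))^2 = a^n * (cmod (w^n + c * v^n))^2 / fact n"
      using fpos by (simp add: taylor_Ex lambda_seq_def norm_divide power_divide power2_eq_square field_simps)
    have le: "(cmod (w^n + c * v^n))^2 \<le> 2 * ((cmod w)^2)^n + 2 * (cmod c)^2 * ((cmod v)^2)^n"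
      using norm_sq_add_le[of "w^n" "c * v^n"] by (simp add: norm_mult norm_power power_mult_distrib sqpow)
    have "a^n * (cmod (w^n + c * v^n))^2 / fact n \<le> a^n * (2 * ((cmod w)^2)^n + 2 * (cmod c)^2 * ((cmod v)^2)^n) / fact n"
      using a le fpos by (intro divide_right_mono mult_left_mono) auto
    also have "\<dots> = g n" by (simp add: g_def power_mult_distrib field_simps)
    finally show "norm (lambda_seq a n * (cmod (taylor_coeff (ExpC w v c) n))^2) \<le> g n"
      using eq a by (simp add: lambda_seq_def)
  qed
qed

lemma polar_re: "(cmod (A + B))^2 - (cmod (A - B))^2 = 4 * Re (A * cnj B)"
  unfolding cmod_power2 by (simp add: power2_eq_square algebra_simps)

lemma polar_im: "(cmod (A + \<i> * B))^2 - (cmod (A - \<i> * B))^2 = 4 * Im (A * cnj B)"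
  unfolding cmod_power2 by (simp add: power2_eq_square algebra_simps)

lemma exp_prod:
  assumes w: "w = Complex (t/2) (s/2)"
  shows "exp (w * z) * cnj (exp ((-w) * z)) = exp (\<i> * complex_of_real (s * Re z + t * Im z))"
proof -
  have "exp (w * z) * cnj (exp ((-w) * z)) = exp (w * z + cnj ((-w) * z))"
    by (simp add: exp_cnj flip: exp_add)
  also have "w * z + cnj ((-w) * z) = \<i> * complex_of_real (s * Re z + t * Im z)"
    using w by (simp add: complex_eq_iff algebra_simps)
  finally show ?thesis .
qed

lemma cos_polar:
  assumes w: "w = Complex (t/2) (s/2)"
  shows "cos (s * Re z + t * Im z) = ((cmod (ExpC w (-w) 1 z))^2 - (cmod (ExpC w (-w) (-1) z))^2) / 4"
proof -
  have "(cmod (ExpC w (-w) 1 z))^2 - (cmod (ExpC w (-w) (-1) z))^2 = 4 * Re (exp (w * z) * cnj (exp ((-w) * z)))"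
    using polar_re[of "exp (w * z)" "exp ((-w) * z)"] by (simp add: ExpC_def)
  also have "\<dots> = 4 * cos (s * Re z + t * Im z)"
    by (subst exp_prod[OF w]) (simp add: Re_exp)
  finally show ?thesis by simp
qed

lemma sin_polar:
  assumes w: "w = Complex (t/2) (s/2)"
  shows "sin (s * Re z + t * Im z) = ((cmod (ExpC w (-w) \<i> z))^2 - (cmod (ExpC w (-w) (-\<i>) z))^2) / 4"
proof -
  have "(cmod (ExpC w (-w) \<i> z))^2 - (cmod (ExpC w (-w) (-\<i>) z))^2 = 4 * Im (exp (w * z) * cnj (exp ((-w) * z)))"
    using polar_im[of "exp (w * z)" "exp ((-w) * z)"] by (simp add: ExpC_def)
  also have "\<dots> = 4 * sin (s * Re z + t * Im z)"
    by (subst exp_prod[OF w]) (simp add: Im_exp)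
  finally show ?thesis by simp
qed

lemma P_Ex:
  assumes a: "a > 0" and P: "Pprop a \<nu>"
  shows "integrable \<nu> (\<lambda>z. (cmod (ExpC w v c z))^2)"
    and "H_lambda_norm_sq (lambda_seq a) (ExpC w v c) = (\<integral>z. (cmod (ExpC w v c z))^2 \<partial>\<nu>)"
  using P inH_Ex[OF a] Ex_holo unfolding Pprop_def by blast+

lemma fourier_of_P:
  assumes a: "a > 0" and P: "Pprop a \<nu>" and w: "w = Complex (t/2) (s/2)"
  shows "(\<integral>z. cos (s * Re z + t * Im z) \<partial>\<nu>) =
      (H_lambda_norm_sq (lambda_seq a) (ExpC w (-w) 1) - H_lambda_norm_sq (lambda_seq a) (ExpC w (-w) (-1))) / 4"
    and "(\<integral>z. sin (s * Re z + t * Im z) \<partial>\<nu>) =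
      (H_lambda_norm_sq (lambda_seq a) (ExpC w (-w) \<i>) - H_lambda_norm_sq (lambda_seq a) (ExpC w (-w) (-\<i>))) / 4"
proof -
  note I = P_Ex[OF a P]
  have "(\<integral>z. cos (s * Re z + t * Im z) \<partial>\<nu>) = (\<integral>z. ((cmod (ExpC w (-w) 1 z))^2 - (cmod (ExpC w (-w) (-1) z))^2) / 4 \<partial>\<nu>)"
    by (simp add: cos_polar[OF w])
  also have "\<dots> = ((\<integral>z. (cmod (ExpC w (-w) 1 z))^2 \<partial>\<nu>) - (\<integral>z. (cmod (ExpC w (-w) (-1) z))^2 \<partial>\<nu>)) / 4"
    using I(1)[of w "-w" 1] I(1)[of w "-w" "-1"] by simp
  finally show "(\<integral>z. cos (s * Re z + t * Im z) \<partial>\<nu>) =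
      (H_lambda_norm_sq (lambda_seq a) (ExpC w (-w) 1) - H_lambda_norm_sq (lambda_seq a) (ExpC w (-w) (-1))) / 4"
    by (simp add: I(2))
  have "(\<integral>z. sin (s * Re z + t * Im z) \<partial>\<nu>) = (\<integral>z. ((cmod (ExpC w (-w) \<i> z))^2 - (cmod (ExpC w (-w) (-\<i>) z))^2) / 4 \<partial>\<nu>)"
    by (simp add: sin_polar[OF w])
  also have "\<dots> = ((\<integral>z. (cmod (ExpC w (-w) \<i> z))^2 \<partial>\<nu>) - (\<integral>z. (cmod (ExpC w (-w) (-\<i>) z))^2 \<partial>\<nu>)) / 4"
    using I(1)[of w "-w" "\<i>"] I(1)[of w "-w" "-\<i>"] by simp
  finally show "(\<integral>z. sin (s * Re z + t * Im z) \<partial>\<nu>) =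
      (H_lambda_norm_sq (lambda_seq a) (ExpC w (-w) \<i>) - H_lambda_norm_sq (lambda_seq a) (ExpC w (-w) (-\<i>))) / 4"
    by (simp add: I(2))
qed

lemma finite_of_P:
  assumes a: "a > 0" and P: "Pprop a \<nu>"
  shows "finite_measure \<nu>"
proof -
  have "integrable \<nu> (\<lambda>z. (cmod (ExpC 0 0 0 z))^2)" by (rule P_Ex(1)[OF a P])
  then have "integrable \<nu> (\<lambda>z. 1 :: real)" by (simp add: ExpC_def)
  then have "(\<integral>\<^sup>+x. ennreal (norm (1::real)) \<partial>\<nu>) < \<infinity>" by (simp only: integrable_iff_bounded)
  then have "emeasure \<nu> (space \<nu>) < \<infinity>" by simp
  then show ?thesis by (intro finite_measureI) simp
qed

lemma unique_P:
  assumes a: "a > 0" and P1: "Pprop a \<nu>1" and P2: "Pprop a \<nu>2"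
  shows "\<nu>1 = \<nu>2"
proof (rule fourier_unique)
  show "finite_measure \<nu>1" "finite_measure \<nu>2" using finite_of_P[OF a] P1 P2 by auto
  show "sets \<nu>1 = sets borel" "sets \<nu>2 = sets borel" using P1 P2 by (auto simp: Pprop_def)
  fix s t
  show "(\<integral>z. cos (s * Re z + t * Im z) \<partial>\<nu>1) = (\<integral>z. cos (s * Re z + t * Im z) \<partial>\<nu>2)"
    using fourier_of_P(1)[where s=s and t=t, OF a P1 refl] fourier_of_P(1)[where s=s and t=t, OF a P2 refl] by simp
  show "(\<integral>z. sin (s * Re z + t * Im z) \<partial>\<nu>1) = (\<integral>z. sin (s * Re z + t * Im z) \<partial>\<nu>2)"
    using fourier_of_P(2)[where s=s and t=t, OF a P1 refl] fourier_of_P(2)[where s=s and t=t, OF a P2 refl] by simp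
qed

theorem theorem4p8:
  fixes a :: real
  assumes "a > 0"
  shows "\<exists>!\<mu>::complex measure. sets \<mu> = sets borel \<and>
    (\<forall>F. F holomorphic_on UNIV \<longrightarrow>
       ((in_H_lambda (lambda_seq a) F \<longleftrightarrow> integrable \<mu> (\<lambda>z. (cmod (F z))\<^sup>2)) \<and>
        (in_H_lambda (lambda_seq a) F \<longrightarrow>
           H_lambda_norm_sq (lambda_seq a) F = (\<integral>z. (cmod (F z))\<^sup>2 \<partial>\<mu>))))"
proof -
  have "\<exists>!\<mu>. Pprop a \<mu>"
  proof (rule ex1I[of _ "muG a"])
    show "Pprop a (muG a)" by (rule Pprop_muG[OF assms])
    fix \<mu> assume "Pprop a \<mu>"
    then show "\<mu> = muG a" by (rule unique_P[OF assms _ Pprop_muG[OF assms]])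
  qed
  then show ?thesis unfolding Pprop_def .
qed

end
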